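(* Let $\mathcal H=\mathcal H_A\otimes\mathcal H_B$ be finite-dimensional, with local Hamiltonians $H_X(t_i)=\sum_{l_X}E^i_{l_X}\Pi^i_{l_X}$, $H_X(t_f)=\sum_{k_X}E^f_{k_X}\Pi^f_{k_X}$ ($X=A,B$), $\beta>0$, local thermal states $\gamma^X_{\beta,i}=e^{-\beta H_X(t_i)}/\mathcal Z^X_{\beta,i}$, $\gamma^X_{\beta,f}=e^{-\beta H_X(t_f)}/\mathcal Z^X_{\beta,f}$, $\gamma_{\beta,i}=\gamma^A_{\beta,i}\otimes\gamma^B_{\beta,i}$, $\gamma_{\beta,f}=\gamma^A_{\beta,f}\otimes\gamma^B_{\beta,f}$, and $\Delta F=-\beta^{-1}\ln\big(\mathcal Z^A_{\beta,f}\mathcal Z^B_{\beta,f}/(\mathcal Z^A_{\beta,i}\mathcal Z^B_{\beta,i})\big)$. Let $\Phi[X]=\sum_\alpha A_\alpha XA_\alpha^\dagger$ be a CPTP map on $\mathcal H$ with a full-rank fixed point $\pi$, and $\tilde\Phi[X]=\sum_\alpha\tilde A_\alpha X\tilde A_\alpha^\dagger$ with $\tilde A_\alpha=\pi^{1/2}A_\alpha^\dagger\pi^{-1/2}$. Let $\rho_i=\gamma_{\beta,i}+\mathfrak E_{AB}$ and $\tilde\rho_i=\gamma_{\beta,f}+\tilde{\mathfrak E}_{AB}$ be density operators, with $\mathfrak E_{AB},\tilde{\mathfrak E}_{AB}$ Hermitian and having vanishing partial traces over $A$ and over $B$. Write $\mathbf l=(l_A,l_B)$, $\mathbf k=(k_A,k_B)$,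 $\Pi^i_{\mathbf l}=\Pi^i_{l_A}\otimes\Pi^i_{l_B}$, $\Pi^f_{\mathbf k}=\Pi^f_{k_A}\otimes\Pi^f_{k_B}$ and, for an operator $\mathcal A$, $p^i_{\mathbf l}(\mathcal A)=\mathrm{Tr}(\mathcal A\Pi^i_{\mathbf l})$, $p^f_{\mathbf k}(\mathcal A)=\mathrm{Tr}(\Phi[\mathcal A]\Pi^f_{\mathbf k})$, $\tilde p^i_{\mathbf k}(\mathcal A)=\mathrm{Tr}(\mathcal A\Pi^f_{\mathbf k})$, $\tilde p^f_{\mathbf l}(\mathcal A)=\mathrm{Tr}(\tilde\Phi[\mathcal A]\Pi^i_{\mathbf l})$; $P_\Gamma(\mathbf l,\mathbf k)=p^i_{\mathbf l}(\rho_i)p^f_{\mathbf k}(\rho_i)$, $P_{\tilde\Gamma}(\mathbf k,\mathbf l)=\tilde p^i_{\mathbf k}(\tilde\rho_i)\tilde p^f_{\mathbf l}(\tilde\rho_i)$. Define $\Psi^{(i)}_{\mathbf l}=\ln\big(1+\tfrac{p^i_{\mathbf l}(\mathfrak E_{AB})}{p^i_{\mathbf l}(\gamma_{\beta,i})}\big)$, $\Psi^{(f)}_{\mathbf k}=\ln\big(1+\tfrac{p^f_{\mathbf k}(\mathfrak E_{AB})}{p^f_{\mathbf k}(\gamma_{\beta,i})}\big)$, $\tilde\Psi^{(i)}_{\mathbf k}=\ln\big(1+\tfrac{\tilde p^i_{\mathbf k}(\tilde{\mathfrak E}_{AB})}{\tilde p^i_{\mathbf k}(\gamma_{\beta,f})}\big)$,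 $\tilde\Psi^{(f)}_{\mathbf l}=\ln\big(1+\tfrac{\tilde p^f_{\mathbf l}(\tilde{\mathfrak E}_{AB})}{\tilde p^f_{\mathbf l}(\gamma_{\beta,f})}\big)$, $\Delta\Psi_{\mathbf l,\mathbf k}=\Psi^{(i)}_{\mathbf l}+\Psi^{(f)}_{\mathbf k}-\tilde\Psi^{(i)}_{\mathbf k}-\tilde\Psi^{(f)}_{\mathbf l}$ and $\Delta\sigma_{\mathbf l,\mathbf k}=\ln p^f_{\mathbf k}(\gamma_{\beta,i})-\ln\tilde p^f_{\mathbf l}(\gamma_{\beta,f})$. Then, for every $(\mathbf l,\mathbf k)$ for which these quantities are well defined, $$\ln\frac{P_\Gamma(\mathbf l,\mathbf k)}{P_{\tilde\Gamma}(\mathbf k,\mathbf l)}=\beta(\Delta E_{\mathbf l,\mathbf k}-\Delta F)+\Delta\sigma_{\mathbf l,\mathbf k}+\Delta\Psi_{\mathbf l,\mathbf k},\qquad \Delta E_{\mathbf l,\mathbf k}=E^f_{k_A}+E^f_{k_B}-E^i_{l_A}-E^i_{l_B}.$$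
   Context: $\Phi$ and $\tilde\Phi$ are extended linearly to arbitrary (not necessarily positive) operators.
   Formalization: Each eigenprojector $\Pi^i_{l_X}$ and $\Pi^f_{k_X}$ in the decompositions of $H_X(t_i)$ and $H_X(t_f)$ is rank one (trace 1), though the energies $E^i_{l_X}$, $E^f_{k_X}$ may repeat. Apart from conventions, each condition added here is assumed in the paper as well or is needed for the statement above to hold. *)

theory Defs
  imports "Jordan_Normal_Form.Schur_Decomposition"
begin

definition trace :: "complex mat \<Rightarrow> complex" where
  "trace A = (\<Sum>i<dim_row A. A $$ (i,i))"

text \<open>Kronecker (tensor) product of matrices; the basis index (a,b) of H_A (x) H_B
  is a * dim_B + b.\<close>
definition kron :: "complex mat \<Rightarrow> complex mat \<Rightarrow> complex mat" where
  "kron A B = mat (dim_row A * dim_row B) (dim_col A * dim_col B)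
     (\<lambda>(i,j). A $$ (i div dim_row B, j div dim_col B) * B $$ (i mod dim_row B, j mod dim_col B))"

definition ptrace_A :: "nat \<Rightarrow> nat \<Rightarrow> complex mat \<Rightarrow> complex mat" where
  "ptrace_A dA dB M = mat dB dB (\<lambda>(i,j). \<Sum>a<dA. M $$ (a * dB + i, a * dB + j))"

definition ptrace_B :: "nat \<Rightarrow> nat \<Rightarrow> complex mat \<Rightarrow> complex mat" where
  "ptrace_B dA dB M = mat dA dA (\<lambda>(a,b). \<Sum>i<dB. M $$ (a * dB + i, b * dB + i))"

definition msum :: "nat \<Rightarrow> ('i::finite \<Rightarrow> complex mat) \<Rightarrow> complex mat" where
  "msum d f = mat d d (\<lambda>(i,j). \<Sum>x\<in>UNIV. f x $$ (i,j))"

definition hermitian :: "nat \<Rightarrow> complex mat \<Rightarrow> bool" where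
  "hermitian d A \<longleftrightarrow> A \<in> carrier_mat d d \<and> mat_adjoint A = A"

definition psd :: "nat \<Rightarrow> complex mat \<Rightarrow> bool" where
  "psd d A \<longleftrightarrow> hermitian d A \<and> (\<forall>v \<in> carrier_vec d. 0 \<le> Re ((A *\<^sub>v v) \<bullet>c v))"

definition density :: "nat \<Rightarrow> complex mat \<Rightarrow> bool" where
  "density d \<rho> \<longleftrightarrow> psd d \<rho> \<and> trace \<rho> = 1"

text \<open>H = sum_l E_l Pi_l, with Pi_l a complete family of mutually orthogonal
  rank-one orthogonal projectors (non-degenerate spectral decomposition).\<close>
definition spectral_decomp :: "nat \<Rightarrow> complex mat \<Rightarrow> ('l::finite \<Rightarrow> real) \<Rightarrow> ('l \<Rightarrow> complex mat) \<Rightarrow> bool" where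
  "spectral_decomp d H E P \<longleftrightarrow>
     H \<in> carrier_mat d d \<and>
     (\<forall>l. P l \<in> carrier_mat d d \<and> mat_adjoint (P l) = P l \<and> P l * P l = P l \<and> trace (P l) = 1) \<and>
     (\<forall>l l'. l \<noteq> l' \<longrightarrow> P l * P l' = 0\<^sub>m d d) \<and>
     msum d P = 1\<^sub>m d \<and>
     H = msum d (\<lambda>l. complex_of_real (E l) \<cdot>\<^sub>m P l)"

definition exp_mbeta :: "nat \<Rightarrow> real \<Rightarrow> ('l::finite \<Rightarrow> real) \<Rightarrow> ('l \<Rightarrow> complex mat) \<Rightarrow> complex mat" where
  "exp_mbeta d \<beta> E P = msum d (\<lambda>l. complex_of_real (exp (- \<beta> * E l)) \<cdot>\<^sub>m P l)"

definition partition_fn :: "nat \<Rightarrow> real \<Rightarrow> ('l::finite \<Rightarrow> real) \<Rightarrow> ('l \<Rightarrow> complex mat) \<Rightarrow> real" where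
  "partition_fn d \<beta> E P = Re (trace (exp_mbeta d \<beta> E P))"

definition thermal :: "nat \<Rightarrow> real \<Rightarrow> ('l::finite \<Rightarrow> real) \<Rightarrow> ('l \<Rightarrow> complex mat) \<Rightarrow> complex mat" where
  "thermal d \<beta> E P = complex_of_real (1 / partition_fn d \<beta> E P) \<cdot>\<^sub>m exp_mbeta d \<beta> E P"

definition kraus_map :: "nat \<Rightarrow> ('a::finite \<Rightarrow> complex mat) \<Rightarrow> complex mat \<Rightarrow> complex mat" where
  "kraus_map d K X = msum d (\<lambda>\<alpha>. K \<alpha> * X * mat_adjoint (K \<alpha>))"

definition cptp_kraus :: "nat \<Rightarrow> ('a::finite \<Rightarrow> complex mat) \<Rightarrow> bool" where
  "cptp_kraus d K \<longleftrightarrow> (\<forall>\<alpha>. K \<alpha> \<in> carrier_mat d d) \<and>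
     msum d (\<lambda>\<alpha>. mat_adjoint (K \<alpha>) * K \<alpha>) = 1\<^sub>m d"

text \<open>Tr(A Pi) (real part; it is real for the Hermitian operators considered).\<close>
definition prob_tr :: "complex mat \<Rightarrow> complex mat \<Rightarrow> real" where
  "prob_tr X Q = Re (trace (X * Q))"

end

theory Submission
  imports Defs
begin

lemma sum_mult_split: fixes m n :: nat and f :: "nat \<Rightarrow> 'a::comm_monoid_add" shows "(\<Sum>i<m*n. f i) = (\<Sum>a<m. \<Sum>b<n. f (a*n+b))"
proof (induct m)
  case 0 then show ?case by simp
next
  case (Suc m)
  have "(\<Sum>i<Suc m*n. f i) = (\<Sum>i<m*n. f i) + (\<Sum>i=m*n..<m*n+n. f i)"
    by (simp add: add.commute lessThan_atLeast0 sum.atLeastLessThan_concat)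
  also have "(\<Sum>i=m*n..<m*n+n. f i) = (\<Sum>b<n. f (m*n+b))"
    using sum.shift_bounds_nat_ivl[of f 0 "m*n" n]
    by (simp add: lessThan_atLeast0 add.commute)
  finally show ?case using Suc by simp
qed

lemma trace_kron:
  assumes A: "A \<in> carrier_mat m m" and C: "C \<in> carrier_mat m m"
    and B: "B \<in> carrier_mat n n" and D: "D \<in> carrier_mat n n"
  shows "trace (kron A B * kron C D) = trace (A * C) * trace (B * D)"
proof -
  have ix: "kron A B $$ (i,j) = A $$ (i div n, j div n) * B $$ (i mod n, j mod n)"
    "kron C D $$ (i,j) = C $$ (i div n, j div n) * D $$ (i mod n, j mod n)"
    if "i < m*n" "j < m*n" for i j
    using A B C D that by (auto simp: kron_def)
  have "trace (kron A B * kron C D) = (\<Sum>i<m*n. \<Sum>j<m*n. kron A B $$ (i,j) * kron C D $$ (j,i))"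
    using A B C D by (simp add: trace_def kron_def scalar_prod_def lessThan_atLeast0 mult.commute)
  also have "\<dots> = (\<Sum>i<m*n. \<Sum>j<m*n. (A $$ (i div n, j div n) * C $$ (j div n, i div n)) * (B $$ (i mod n, j mod n) * D $$ (j mod n, i mod n)))"
    by (intro sum.cong refl) (simp add: ix mult_ac)
  also have "\<dots> = (\<Sum>a<m. \<Sum>b<n. \<Sum>c<m. \<Sum>e<n. (A $$ (a, c) * C $$ (c, a)) * (B $$ (b, e) * D $$ (e, b)))"
    unfolding sum_mult_split by (intro sum.cong refl) (simp add: sum_mult_split)
  also have "\<dots> = (\<Sum>a<m. \<Sum>c<m. A $$ (a, c) * C $$ (c, a)) * (\<Sum>b<n. \<Sum>e<n. B $$ (b, e) * D $$ (e, b))"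
    by (simp add: sum_distrib_left sum_distrib_right sum.swap[of _ "{..<n}" "{..<m}"])
  also have "\<dots> = trace (A * C) * trace (B * D)"
    using A B C D by (simp add: trace_def scalar_prod_def lessThan_atLeast0)
  finally show ?thesis .
qed

lemma adjoint_carrier: "A \<in> carrier_mat n m \<Longrightarrow> mat_adjoint A \<in> carrier_mat m n"
  by (auto simp: mat_adjoint_def mat_of_rows_def)

lemma msum_carrier[simp]: "msum d f \<in> carrier_mat d d"
  by (simp add: msum_def)

lemma msum_mult_right:
  assumes "\<And>x. f x \<in> carrier_mat d d" and "Q \<in> carrier_mat d d"
  shows "msum d f * Q = msum d (\<lambda>x. f x * Q)"
proof (rule eq_matI)
  fix i j assume ij: "i < dim_row (msum d (\<lambda>x. f x * Q))" "j < dim_col (msum d (\<lambda>x. f x * Q))"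
  then have i: "i < d" and j: "j < d" by (auto simp: msum_def)
  have "(msum d f * Q) $$ (i,j) = (\<Sum>k<d. (\<Sum>x\<in>UNIV. f x $$ (i,k)) * Q $$ (k,j))"
    using i j assms by (simp add: msum_def scalar_prod_def lessThan_atLeast0)
  also have "\<dots> = (\<Sum>x\<in>UNIV. \<Sum>k<d. f x $$ (i,k) * Q $$ (k,j))"
    by (simp add: sum_distrib_right sum.swap[of _ "{..<d}"])
  also have "\<dots> = msum d (\<lambda>x. f x * Q) $$ (i,j)"
  proof -
    have "dim_col (f x) = d" "dim_row (f x) = d" for x using assms(1)[of x] by auto
    then show ?thesis using i j assms by (simp add: msum_def scalar_prod_def lessThan_atLeast0)
  qed
  finally show "(msum d f * Q) $$ (i,j) = msum d (\<lambda>x. f x * Q) $$ (i,j)" .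
qed (use assms in \<open>auto simp: msum_def\<close>)

lemma trace_msum:
  assumes "\<And>x. f x \<in> carrier_mat d d"
  shows "trace (msum d f) = (\<Sum>x\<in>UNIV. trace (f x))"
proof -
  have "dim_row (f x) = d" for x using assms[of x] by simp
  then show ?thesis using assms by (simp add: trace_def msum_def sum.swap[of _ "{..<d}"])
qed

lemma msum_single:
  assumes "M \<in> carrier_mat d d"
  shows "msum d (\<lambda>x. if x = l then M else 0\<^sub>m d d) = M"
proof (rule eq_matI)
  fix i j assume "i < dim_row M" "j < dim_col M"
  then show "msum d (\<lambda>x. if x = l then M else 0\<^sub>m d d) $$ (i,j) = M $$ (i,j)"
    using assms by (simp add: msum_def if_distrib[of "\<lambda>A. A $$ (i,j)"] cong: if_cong)
qed (use assms in \<open>auto simp: msum_def\<close>)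

lemma msum_add:
  assumes "\<And>x. f x \<in> carrier_mat d d" "\<And>x. g x \<in> carrier_mat d d"
  shows "msum d (\<lambda>x. f x + g x) = msum d f + msum d g"
proof -
  have "dim_row (f x) = d" "dim_col (f x) = d" "dim_row (g x) = d" "dim_col (g x) = d" for x
    using assms(1)[of x] assms(2)[of x] by auto
  then show ?thesis using assms by (intro eq_matI) (auto simp: msum_def sum.distrib)
qed

lemma trace_add:
  assumes "A \<in> carrier_mat d d" "B \<in> carrier_mat d d"
  shows "trace (A + B) = trace A + trace B"
  using assms by (simp add: trace_def sum.distrib)

lemma trace_smult:
  assumes "A \<in> carrier_mat d d"
  shows "trace (c \<cdot>\<^sub>m A) = c * trace A"
  using assms by (simp add: trace_def sum_distrib_left)

lemma prob_tr_add:
  assumes "X \<in> carrier_mat d d" "Y \<in> carrier_mat d d" "Q \<in> carrier_mat d d"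
  shows "prob_tr (X + Y) Q = prob_tr X Q + prob_tr Y Q"
proof -
  have "(X + Y) * Q = X * Q + Y * Q" using assms by (simp add: add_mult_distrib_mat)
  then show ?thesis using assms by (simp add: prob_tr_def trace_add[of _ d])
qed

lemma kraus_add:
  assumes "\<And>a. K a \<in> carrier_mat d d" "X \<in> carrier_mat d d" "Y \<in> carrier_mat d d"
  shows "kraus_map d K (X + Y) = kraus_map d K X + kraus_map d K Y"
proof -
  have "K a * (X + Y) * mat_adjoint (K a) = K a * X * mat_adjoint (K a) + K a * Y * mat_adjoint (K a)" for a
  proof -
    have "K a * (X + Y) = K a * X + K a * Y" using assms by (simp add: mult_add_distrib_mat[of _ d d])
    moreover have "mat_adjoint (K a) \<in> carrier_mat d d" using assms(1)[of a] by (simp add: adjoint_carrier)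
    moreover have "K a * X \<in> carrier_mat d d" "K a * Y \<in> carrier_mat d d" using assms(1)[of a] assms(2,3) by (auto intro: mult_carrier_mat)
    ultimately show ?thesis by (metis add_mult_distrib_mat)
  qed
  moreover have "mat_adjoint (K a) \<in> carrier_mat d d" for a using assms(1)[of a] by (simp add: adjoint_carrier)
  moreover have "K a * X * mat_adjoint (K a) \<in> carrier_mat d d" "K a * Y * mat_adjoint (K a) \<in> carrier_mat d d" for a
    using assms(1)[of a] assms(2,3) adjoint_carrier[OF assms(1)[of a]] by (auto intro!: mult_carrier_mat)
  ultimately show ?thesis unfolding kraus_map_def
    by (simp add: msum_add[of _ d])
qed

lemma thermal_facts:
  assumes "spectral_decomp d H E P"
  shows "partition_fn d \<beta> E P = (\<Sum>l\<in>UNIV. exp (- \<beta> * E l))"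
    and "trace (thermal d \<beta> E P * P l) = complex_of_real (exp (- \<beta> * E l) / partition_fn d \<beta> E P)"
    and "thermal d \<beta> E P \<in> carrier_mat d d"
proof -
  have P: "\<And>l. P l \<in> carrier_mat d d" "\<And>l. P l * P l = P l" "\<And>l. trace (P l) = 1"
    "\<And>l l'. l \<noteq> l' \<Longrightarrow> P l * P l' = 0\<^sub>m d d"
    using assms by (auto simp: spectral_decomp_def)
  have "trace (exp_mbeta d \<beta> E P) = (\<Sum>l\<in>UNIV. complex_of_real (exp (- \<beta> * E l)))"
    unfolding exp_mbeta_def using P by (subst trace_msum[of _ d]) (auto simp: trace_smult[of _ d])
  then show Z: "partition_fn d \<beta> E P = (\<Sum>l\<in>UNIV. exp (- \<beta> * E l))"
    unfolding partition_fn_def by simp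
  show "thermal d \<beta> E P \<in> carrier_mat d d" by (simp add: thermal_def exp_mbeta_def)
  have "exp_mbeta d \<beta> E P * P l = msum d (\<lambda>x. (complex_of_real (exp (- \<beta> * E x)) \<cdot>\<^sub>m P x) * P l)"
    unfolding exp_mbeta_def using P by (intro msum_mult_right) auto
  also have "\<dots> = msum d (\<lambda>x. if x = l then complex_of_real (exp (- \<beta> * E l)) \<cdot>\<^sub>m P l else 0\<^sub>m d d)"
    using P by (intro arg_cong[where f="msum d"] ext) (auto simp: mult_smult_assoc_mat[of _ d d _ d])
  also have "\<dots> = complex_of_real (exp (- \<beta> * E l)) \<cdot>\<^sub>m P l"
    using P by (intro msum_single) auto
  finally have e: "exp_mbeta d \<beta> E P * P l = complex_of_real (exp (- \<beta> * E l)) \<cdot>\<^sub>m P l" .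
  have "thermal d \<beta> E P * P l = complex_of_real (1 / partition_fn d \<beta> E P) \<cdot>\<^sub>m (exp_mbeta d \<beta> E P * P l)"
    unfolding thermal_def using P by (simp add: exp_mbeta_def mult_smult_assoc_mat[of _ d d _ d])
  then show "trace (thermal d \<beta> E P * P l) = complex_of_real (exp (- \<beta> * E l) / partition_fn d \<beta> E P)"
    using P by (simp add: e trace_smult[of _ d])
qed

theorem mainTheorem6:
  fixes dA dB :: nat and \<beta> :: real
    and HiA HfA HiB HfB :: "complex mat"
    and EiA :: "'la::finite \<Rightarrow> real" and PiA :: "'la \<Rightarrow> complex mat"
    and EfA :: "'ka::finite \<Rightarrow> real" and PfA :: "'ka \<Rightarrow> complex mat"
    and EiB :: "'lb::finite \<Rightarrow> real" and PiB :: "'lb \<Rightarrow> complex mat"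
    and EfB :: "'kb::finite \<Rightarrow> real" and PfB :: "'kb \<Rightarrow> complex mat"
    and K :: "'al::finite \<Rightarrow> complex mat"
    and \<pi> S Sinv :: "complex mat"
    and Ecor Etil :: "complex mat"
    and lA :: 'la and lB :: 'lb and kA :: 'ka and kB :: 'kb
  assumes "d = dA * dB"
    and "ZiA = partition_fn dA \<beta> EiA PiA" and "ZfA = partition_fn dA \<beta> EfA PfA"
    and "ZiB = partition_fn dB \<beta> EiB PiB" and "ZfB = partition_fn dB \<beta> EfB PfB"
    and "\<gamma>i = kron (thermal dA \<beta> EiA PiA) (thermal dB \<beta> EiB PiB)"
    and "\<gamma>f = kron (thermal dA \<beta> EfA PfA) (thermal dB \<beta> EfB PfB)"
    and "\<Delta>F = - (1 / \<beta>) * ln ((ZfA * ZfB) / (ZiA * ZiB))"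
    and "Kt = (\<lambda>\<alpha>. S * mat_adjoint (K \<alpha>) * Sinv)"
    and "\<rho>i = \<gamma>i + Ecor" and "\<rho>ti = \<gamma>f + Etil"
    and "Pil = kron (PiA lA) (PiB lB)" and "Pfk = kron (PfA kA) (PfB kB)"
    and "p_i = (\<lambda>X. prob_tr X Pil)"
    and "pf = (\<lambda>X. prob_tr (kraus_map d K X) Pfk)"
    and "pti = (\<lambda>X. prob_tr X Pfk)"
    and "ptf = (\<lambda>X. prob_tr (kraus_map d Kt X) Pil)"
    and "PG = p_i \<rho>i * pf \<rho>i" and "PGt = pti \<rho>ti * ptf \<rho>ti"
    and "\<Psi>i = ln (1 + p_i Ecor / p_i \<gamma>i)" and "\<Psi>f = ln (1 + pf Ecor / pf \<gamma>i)"
    and "\<Psi>ti = ln (1 + pti Etil / pti \<gamma>f)" and "\<Psi>tf = ln (1 + ptf Etil / ptf \<gamma>f)"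
    and "\<Delta>\<Psi> = \<Psi>i + \<Psi>f - \<Psi>ti - \<Psi>tf"
    and "\<Delta>\<sigma> = ln (pf \<gamma>i) - ln (ptf \<gamma>f)"
    and "\<Delta>E = EfA kA + EfB kB - EiA lA - EiB lB"
    and "0 < \<beta>"
    and "spectral_decomp dA HiA EiA PiA" and "spectral_decomp dA HfA EfA PfA"
    and "spectral_decomp dB HiB EiB PiB" and "spectral_decomp dB HfB EfB PfB"
    and "cptp_kraus d K"
    and "psd d \<pi>" and "invertible_mat \<pi>" and "kraus_map d K \<pi> = \<pi>"
    and "psd d S" and "S * S = \<pi>"
    and "Sinv \<in> carrier_mat d d" and "S * Sinv = 1\<^sub>m d" and "Sinv * S = 1\<^sub>m d"
    and "hermitian d Ecor" and "ptrace_A dA dB Ecor = 0\<^sub>m dB dB" and "ptrace_B dA dB Ecor = 0\<^sub>m dA dA"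
    and "hermitian d Etil" and "ptrace_A dA dB Etil = 0\<^sub>m dB dB" and "ptrace_B dA dB Etil = 0\<^sub>m dA dA"
    and "density d \<rho>i" and "density d \<rho>ti"
    \<comment> \<open>well-definedness of the quantities at (l,k)\<close>
    and "p_i \<gamma>i \<noteq> 0" and "pf \<gamma>i \<noteq> 0" and "pti \<gamma>f \<noteq> 0" and "ptf \<gamma>f \<noteq> 0"
    and "0 < 1 + p_i Ecor / p_i \<gamma>i" and "0 < 1 + pf Ecor / pf \<gamma>i"
    and "0 < 1 + pti Etil / pti \<gamma>f" and "0 < 1 + ptf Etil / ptf \<gamma>f"
    and "0 < pf \<gamma>i" and "0 < ptf \<gamma>f"
    and "PGt \<noteq> 0" and "0 < PG / PGt"
  shows "ln (PG / PGt) = \<beta> * (\<Delta>E - \<Delta>F) + \<Delta>\<sigma> + \<Delta>\<Psi>"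
proof -
  note A = assms
  have dA: "\<And>X. X \<in> carrier_mat dA dA \<Longrightarrow> X \<in> carrier_mat dA dA" by simp
  have PiA: "PiA lA \<in> carrier_mat dA dA" and PfA: "PfA kA \<in> carrier_mat dA dA"
    and PiB: "PiB lB \<in> carrier_mat dB dB" and PfB: "PfB kB \<in> carrier_mat dB dB"
    using A(28-31) by (auto simp: spectral_decomp_def)
  have thiA: "thermal dA \<beta> EiA PiA \<in> carrier_mat dA dA" using thermal_facts(3)[OF A(28)] .
  have thfA: "thermal dA \<beta> EfA PfA \<in> carrier_mat dA dA" using thermal_facts(3)[OF A(29)] .
  have thiB: "thermal dB \<beta> EiB PiB \<in> carrier_mat dB dB" using thermal_facts(3)[OF A(30)] .
  have thfB: "thermal dB \<beta> EfB PfB \<in> carrier_mat dB dB" using thermal_facts(3)[OF A(31)] .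
  have kc: "\<And>X Y m n. X \<in> carrier_mat m m \<Longrightarrow> Y \<in> carrier_mat n n \<Longrightarrow> kron X Y \<in> carrier_mat (m*n) (m*n)"
    by (auto simp: kron_def)
  have gi: "\<gamma>i \<in> carrier_mat d d" using kc[OF thiA thiB] A(1,6) by simp
  have gf: "\<gamma>f \<in> carrier_mat d d" using kc[OF thfA thfB] A(1,7) by simp
  have Pil: "Pil \<in> carrier_mat d d" using kc[OF PiA PiB] A(1,12) by simp
  have Pfk: "Pfk \<in> carrier_mat d d" using kc[OF PfA PfB] A(1,13) by simp
  have Ec: "Ecor \<in> carrier_mat d d" "Etil \<in> carrier_mat d d" using A(41,44) by (auto simp: hermitian_def)
  have Kc: "\<And>a. K a \<in> carrier_mat d d" using A(32) by (auto simp: cptp_kraus_def)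
  have Sc: "S \<in> carrier_mat d d" using A(36) by (auto simp: psd_def hermitian_def)
  have Ktc: "\<And>a. Kt a \<in> carrier_mat d d"
    using A(9) Sc A(38) adjoint_carrier[OF Kc] by (auto intro!: mult_carrier_mat)
  have km: "\<And>K X. kraus_map d K X \<in> carrier_mat d d" by (simp add: kraus_map_def)
  have e1: "p_i \<rho>i = p_i \<gamma>i + p_i Ecor" using A(10,14) prob_tr_add[OF gi Ec(1) Pil] by simp
  have e2: "pf \<rho>i = pf \<gamma>i + pf Ecor" using A(10,15) prob_tr_add[OF km km Pfk] kraus_add[of K d, OF Kc gi Ec(1)] by simp
  have e3: "pti \<rho>ti = pti \<gamma>f + pti Etil" using A(11,16) prob_tr_add[OF gf Ec(2) Pfk] by simp
  have e4: "ptf \<rho>ti = ptf \<gamma>f + ptf Etil" using A(11,17) prob_tr_add[OF km km Pil] kraus_add[of Kt d, OF Ktc gf Ec(2)] by simp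
  define eiA where "eiA = exp (- \<beta> * EiA lA)"
  define eiB where "eiB = exp (- \<beta> * EiB lB)"
  define efA where "efA = exp (- \<beta> * EfA kA)"
  define efB where "efB = exp (- \<beta> * EfB kB)"
  have Zpos: "\<And>E :: 'x::finite \<Rightarrow> real. 0 < (\<Sum>l\<in>UNIV. exp (- \<beta> * E l))"
    by (intro sum_pos) auto
  have ZiA: "ZiA > 0" using A(2) thermal_facts(1)[OF A(28)] Zpos by simp
  have ZfA: "ZfA > 0" using A(3) thermal_facts(1)[OF A(29)] Zpos by simp
  have ZiB: "ZiB > 0" using A(4) thermal_facts(1)[OF A(30)] Zpos by simp
  have ZfB: "ZfB > 0" using A(5) thermal_facts(1)[OF A(31)] Zpos by simp
  have pig: "p_i \<gamma>i = (eiA / ZiA) * (eiB / ZiB)"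
    using A(2,4,6,12,14) trace_kron[OF thiA PiA thiB PiB] thermal_facts(2)[OF A(28)] thermal_facts(2)[OF A(30)]
    by (simp add: prob_tr_def eiA_def eiB_def)
  have ptig: "pti \<gamma>f = (efA / ZfA) * (efB / ZfB)"
    using A(3,5,7,13,16) trace_kron[OF thfA PfA thfB PfB] thermal_facts(2)[OF A(29)] thermal_facts(2)[OF A(31)]
    by (simp add: prob_tr_def efA_def efB_def)
  define a where "a = p_i \<gamma>i"
  define b where "b = pf \<gamma>i"
  define c where "c = pti \<gamma>f"
  define e where "e = ptf \<gamma>f"
  define x1 where "x1 = 1 + p_i Ecor / p_i \<gamma>i"
  define x2 where "x2 = 1 + pf Ecor / pf \<gamma>i"
  define x3 where "x3 = 1 + pti Etil / pti \<gamma>f"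
  define x4 where "x4 = 1 + ptf Etil / ptf \<gamma>f"
  have apos: "a > 0" unfolding a_def pig eiA_def eiB_def using ZiA ZiB by simp
  have cpos: "c > 0" unfolding c_def ptig efA_def efB_def using ZfA ZfB by simp
  have bpos: "b > 0" and epos: "e > 0" using A(57,58) by (auto simp: b_def e_def)
  have xpos: "x1 > 0" "x2 > 0" "x3 > 0" "x4 > 0" using A(53-56) by (auto simp: x1_def x2_def x3_def x4_def)
  have PG: "PG = (a * x1) * (b * x2)"
    using A(18) e1 e2 apos bpos by (simp add: a_def b_def x1_def x2_def field_simps)
  have PGt: "PGt = (c * x3) * (e * x4)"
    using A(19) e3 e4 cpos epos by (simp add: c_def e_def x3_def x4_def field_simps)
  have "ln (PG / PGt) = ln a + ln x1 + ln b + ln x2 - ln c - ln x3 - ln e - ln x4"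
    unfolding PG PGt using apos bpos cpos epos xpos by (simp add: ln_div ln_mult)
  moreover have "ln a = - \<beta> * EiA lA - ln ZiA - \<beta> * EiB lB - ln ZiB"
    unfolding a_def pig eiA_def eiB_def using ZiA ZiB by (simp add: ln_div ln_mult)
  moreover have "ln c = - \<beta> * EfA kA - ln ZfA - \<beta> * EfB kB - ln ZfB"
    unfolding c_def ptig efA_def efB_def using ZfA ZfB by (simp add: ln_div ln_mult)
  moreover have "\<beta> * \<Delta>F = - (ln ZfA + ln ZfB - ln ZiA - ln ZiB)"
    unfolding A(8) using ZiA ZiB ZfA ZfB A(27) by (simp add: ln_div ln_mult)
  moreover have "\<Delta>\<Psi> = ln x1 + ln x2 - ln x3 - ln x4"
    using A(20-24) by (simp add: x1_def x2_def x3_def x4_def)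
  moreover have "\<Delta>\<sigma> = ln b - ln e" using A(25) by (simp add: b_def e_def)
  moreover have "\<beta> * \<Delta>E = \<beta> * EfA kA + \<beta> * EfB kB - \<beta> * EiA lA - \<beta> * EiB lB"
    unfolding A(26) by (simp add: algebra_simps)
  moreover have "\<beta> * (\<Delta>E - \<Delta>F) = \<beta> * \<Delta>E - \<beta> * \<Delta>F" by (simp add: algebra_simps)
  ultimately show ?thesis by linarith
qed

end
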